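(* Let $(X,d)$ be a compact metric space and let $f_{1,\infty}=(f_n)_{n=1}^\infty$ be a sequence of continuous maps $f_n:X\to X$ converging uniformly to a map $f:X\to X$. Then for every $N\in\mathbb{N}$, $(X,f_{1,\infty})$ is DC2' if and only if its $N$-th iterate $(X,f_{1,\infty}^{[N]})$ is DC2'.
   Context: For $i,n\in\mathbb{N}$ write $f_i^n=f_{i+n-1}\circ\cdots\circ f_i$ and $f_i^0=\mathrm{id}_X$. The $N$-th iterate is $f_{1,\infty}^{[N]}=(f_{N(n-1)+1}^N)_{n=1}^\infty$, whose $n$-fold composition from index $1$ is $f_1^{Nn}$. For a non-autonomous system $g_{1,\infty}$ with compositions $g_1^i$, points $x,y\in X$ and $t>0$, set $\Phi(g_{1,\infty},x,y,t)=\liminf_{n\to\infty}\frac1n\#\{0\le i\le n-1: d(g_1^i(x),g_1^i(y))<t\}$ and $\Phi^*(g_{1,\infty},x,y,t)=\limsup_{n\to\infty}\frac1n\#\{0\le i\le n-1: d(g_1^i(x),g_1^i(y))<t\}$. The system is DC2' if there is an uncountable $S\subseteq X$ such that for all distinct $x,y\in S$: $\Phi(g_{1,\infty},x,y,\varepsilon)=0$ for some $\varepsilon>0$ and $\Phi^*(g_{1,\infty},x,y,t)>0$ for all $t>0$. *)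

theory Defs
  imports "HOL-Analysis.Analysis"
begin

text \<open>Non-autonomous systems are sequences indexed from 1: the map f_n is f n (f 0 is unused).\<close>

fun comp_from :: "(nat \<Rightarrow> 'a \<Rightarrow> 'a) \<Rightarrow> nat \<Rightarrow> nat \<Rightarrow> 'a \<Rightarrow> 'a" where
  "comp_from f i 0 = id"
| "comp_from f i (Suc n) = f (i + n) \<circ> comp_from f i n"

text \<open>N-th iterate: (f^{[N]})_n = f_{N(n-1)+1}^N for n >= 1 (index 0 unused, set to id).\<close>
definition nth_iterate :: "nat \<Rightarrow> (nat \<Rightarrow> 'a \<Rightarrow> 'a) \<Rightarrow> nat \<Rightarrow> 'a \<Rightarrow> 'a" where
  "nth_iterate N f n = (if n = 0 then id else comp_from f (N * (n - 1) + 1) N)"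

definition close_count :: "(nat \<Rightarrow> 'a::metric_space \<Rightarrow> 'a) \<Rightarrow> 'a \<Rightarrow> 'a \<Rightarrow> real \<Rightarrow> nat \<Rightarrow> nat" where
  "close_count g x y t n = card {i. i < n \<and> dist (comp_from g 1 i x) (comp_from g 1 i y) < t}"

definition Phi_lower :: "(nat \<Rightarrow> 'a::metric_space \<Rightarrow> 'a) \<Rightarrow> 'a \<Rightarrow> 'a \<Rightarrow> real \<Rightarrow> ereal" where
  "Phi_lower g x y t = liminf (\<lambda>n. ereal (real (close_count g x y t n) / real n))"

definition Phi_upper :: "(nat \<Rightarrow> 'a::metric_space \<Rightarrow> 'a) \<Rightarrow> 'a \<Rightarrow> 'a \<Rightarrow> real \<Rightarrow> ereal" where
  "Phi_upper g x y t = limsup (\<lambda>n. ereal (real (close_count g x y t n) / real n))"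

definition DC2' :: "(nat \<Rightarrow> 'a::metric_space \<Rightarrow> 'a) \<Rightarrow> bool" where
  "DC2' g \<longleftrightarrow> (\<exists>S. uncountable S \<and>
     (\<forall>x\<in>S. \<forall>y\<in>S. x \<noteq> y \<longrightarrow>
        (\<exists>\<epsilon>>0. Phi_lower g x y \<epsilon> = 0) \<and> (\<forall>t>0. Phi_upper g x y t > 0)))"

end

theory Submission
  imports Defs
begin

lemma liminf_zero_iff:
  fixes u :: "nat \<Rightarrow> real"
  assumes "\<And>n. u n \<ge> 0"
  shows "liminf (\<lambda>n. ereal (u n)) = 0 \<longleftrightarrow> (\<forall>e>0. \<forall>M. \<exists>m\<ge>M. u m < e)"
proof
  assume L: "liminf (\<lambda>n. ereal (u n)) = 0"
  show "\<forall>e>0. \<forall>M. \<exists>m\<ge>M. u m < e"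
  proof (intro allI impI)
    fix e :: real and M assume e: "e > 0"
    have "\<not> (ereal e \<le> liminf (\<lambda>n. ereal (u n)))" using L e by simp
    then obtain y where y: "y < ereal e" "\<not> eventually (\<lambda>n. y < ereal (u n)) sequentially"
      unfolding le_Liminf_iff by blast
    then have "\<forall>M. \<exists>m\<ge>M. ereal (u m) \<le> y" unfolding eventually_sequentially by (auto simp: not_less)
    then obtain m where m: "m \<ge> M" "ereal (u m) \<le> y" by blast
    have "ereal (u m) < ereal e" using m(2) y(1) by (rule le_less_trans)
    then have "u m < e" by simp
    then show "\<exists>m\<ge>M. u m < e" using m(1) by blast
  qed
next
  assume R: "\<forall>e>0. \<forall>M. \<exists>m\<ge>M. u m < e"
  have ge: "0 \<le> liminf (\<lambda>n. ereal (u n))"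
    by (rule Liminf_bounded) (auto simp: assms)
  have "\<not> 0 < liminf (\<lambda>n. ereal (u n))"
  proof
    assume p: "0 < liminf (\<lambda>n. ereal (u n))"
    obtain c :: real where c: "c > 0" "ereal c \<le> liminf (\<lambda>n. ereal (u n))"
    proof (cases "liminf (\<lambda>n. ereal (u n))")
      case (real r) then show ?thesis using p that by auto
    next
      case PInf then show ?thesis using that[of 1] by auto
    next
      case MInf then show ?thesis using p by auto
    qed
    then have cc: "\<forall>y<ereal c. eventually (\<lambda>n. y < ereal (u n)) sequentially"
      unfolding le_Liminf_iff by blast
    have "ereal (c/2) < ereal c" using c(1) by simp
    then have "eventually (\<lambda>n. ereal (c/2) < ereal (u n)) sequentially"
      using cc by blast
    then obtain M where M: "\<forall>n\<ge>M. ereal (c/2) < ereal (u n)" unfolding eventually_sequentially by blast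
    have "c/2 > 0" using c(1) by simp
    then obtain m where m: "m \<ge> M" "u m < c/2" using R by blast
    have "ereal (c/2) < ereal (u m)" using M m(1) by blast
    then show False using m(2) by simp
  qed
  then show "liminf (\<lambda>n. ereal (u n)) = 0" using ge by auto
qed

lemma limsup_pos_iff:
  fixes u :: "nat \<Rightarrow> real"
  shows "0 < limsup (\<lambda>n. ereal (u n)) \<longleftrightarrow> (\<exists>e>0. \<forall>M. \<exists>m\<ge>M. u m > e)"
proof
  assume "0 < limsup (\<lambda>n. ereal (u n))"
  then have "\<not> limsup (\<lambda>n. ereal (u n)) \<le> 0" by auto
  then obtain y where y: "y > 0" "\<not> eventually (\<lambda>n. ereal (u n) < y) sequentially"
    unfolding Limsup_le_iff by blast
  then have fr: "\<forall>M. \<exists>m\<ge>M. y \<le> ereal (u m)" unfolding eventually_sequentially by (auto simp: not_less)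
  have "y \<noteq> \<infinity>" using fr by force
  then obtain r where r: "y = ereal r" "r > 0" using y(1) by (cases y) auto
  show "\<exists>e>0. \<forall>M. \<exists>m\<ge>M. u m > e"
  proof (intro exI[of _ "r/2"] conjI allI)
    fix M obtain m where "m \<ge> M" "y \<le> ereal (u m)" using fr by blast
    then show "\<exists>m\<ge>M. u m > r/2" using r by auto
  qed (use r in auto)
next
  assume "\<exists>e>0. \<forall>M. \<exists>m\<ge>M. u m > e"
  then obtain e where e: "e > 0" "\<forall>M. \<exists>m\<ge>M. u m > e" by blast
  have "\<not> limsup (\<lambda>n. ereal (u n)) \<le> 0"
  proof
    assume "limsup (\<lambda>n. ereal (u n)) \<le> 0"
    then have "\<forall>y>0. eventually (\<lambda>n. ereal (u n) < y) sequentially"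
      unfolding Limsup_le_iff by blast
    moreover have "ereal e > 0" using e(1) by simp
    ultimately have "eventually (\<lambda>n. ereal (u n) < ereal e) sequentially" by blast
    then obtain M where "\<forall>n\<ge>M. ereal (u n) < ereal e" unfolding eventually_sequentially by blast
    then have "\<forall>n\<ge>M. u n < e" by simp
    then show False using e(2) by force
  qed
  then show "0 < limsup (\<lambda>n. ereal (u n))" by auto
qed

lemma comp_from_add: "comp_from f i (m + n) = comp_from f (i + m) n \<circ> comp_from f i m"
  by (induction n) (auto simp: add.assoc)

lemma comp_iter: "comp_from (nth_iterate N f) 1 j = comp_from f 1 (N * j)"
proof (induction j)
  case (Suc j)
  have "comp_from f 1 (N * Suc j) = comp_from f (1 + N*j) N \<circ> comp_from f 1 (N*j)"
    by (metis comp_from_add mult_Suc_right add.commute)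
  then show ?case using Suc by (simp add: nth_iterate_def add.commute)
qed simp

lemma equi_single:
  fixes fs :: "nat \<Rightarrow> 'a::metric_space \<Rightarrow> 'a"
  assumes cpt: "compact (UNIV::'a set)" and cont: "\<And>n. n \<ge> 1 \<Longrightarrow> continuous_on UNIV (fs n)"
    and ul: "uniform_limit UNIV fs f sequentially" and e: "e > 0"
  shows "\<exists>d>0. \<forall>n\<ge>1. \<forall>x y. dist x y < d \<longrightarrow> dist (fs n x) (fs n y) < e"
proof -
  have cf: "continuous_on UNIV f"
    by (rule uniform_limit_theorem[OF _ ul]) (auto simp: eventually_sequentially intro!: exI[of _ 1] cont)
  have "uniformly_continuous_on UNIV f" using compact_uniformly_continuous[OF cf cpt] .
  from this[unfolded uniformly_continuous_on_def, rule_format, of "e/3"]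
  obtain d0 where d0: "d0>0" "\<forall>x y. dist x y < d0 \<longrightarrow> dist (f x) (f y) < e/3"
    using e by (auto simp: dist_commute)
  have "\<forall>\<^sub>F n in sequentially. \<forall>x\<in>UNIV. dist (fs n x) (f x) < e/3"
    using uniform_limitD[OF ul, of "e/3"] e by simp
  then obtain M where M: "\<forall>n\<ge>M. \<forall>x. dist (fs n x) (f x) < e/3"
    unfolding eventually_sequentially by auto
  have small: "\<exists>d>0. \<forall>n. 1 \<le> n \<and> n < K \<longrightarrow> (\<forall>x y. dist x y < d \<longrightarrow> dist (fs n x) (fs n y) < e)" for K
  proof (induction K)
    case 0 show ?case by (intro exI[of _ 1]) auto
  next
    case (Suc K)
    then obtain d1 where d1: "d1 > 0" "\<forall>n. 1 \<le> n \<and> n < K \<longrightarrow> (\<forall>x y. dist x y < d1 \<longrightarrow> dist (fs n x) (fs n y) < e)" by blast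
    show ?case
    proof (cases "K \<ge> 1")
      case True
      have "uniformly_continuous_on UNIV (fs K)" using compact_uniformly_continuous[OF cont[OF True] cpt] .
      from this[unfolded uniformly_continuous_on_def, rule_format, of e]
      obtain d2 where d2: "d2>0" "\<forall>x y. dist x y < d2 \<longrightarrow> dist (fs K x) (fs K y) < e"
        using e by (auto simp: dist_commute)
      show ?thesis using d1 d2 by (intro exI[of _ "min d1 d2"]) (auto simp: less_Suc_eq)
    next
      case False then show ?thesis using d1 by (intro exI[of _ d1]) (auto simp: less_Suc_eq)
    qed
  qed
  obtain d1 where d1: "d1 > 0" "\<forall>n. 1 \<le> n \<and> n < M \<longrightarrow> (\<forall>x y. dist x y < d1 \<longrightarrow> dist (fs n x) (fs n y) < e)"
    using small by blast
  show ?thesis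
  proof (intro exI[of _ "min d0 d1"] conjI allI impI)
    fix n :: nat and x y :: 'a assume n: "n \<ge> 1" and dxy: "dist x y < min d0 d1"
    show "dist (fs n x) (fs n y) < e"
    proof (cases "n < M")
      case True then show ?thesis using d1 n dxy by auto
    next
      case False
      then have "dist (fs n x) (f x) < e/3" "dist (fs n y) (f y) < e/3" using M by auto
      moreover have "dist (f x) (f y) < e/3" using d0 dxy by auto
      moreover have "dist (fs n x) (fs n y) \<le> dist (fs n x) (f x) + dist (f x) (fs n y)" by (rule dist_triangle)
      moreover have "dist (f x) (fs n y) \<le> dist (f x) (f y) + dist (f y) (fs n y)" by (rule dist_triangle)
      moreover have "dist (f y) (fs n y) = dist (fs n y) (f y)" by (rule dist_commute)
      ultimately show ?thesis by linarith
    qed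
  qed (use d0 d1 in auto)
qed

lemma equi_comp:
  fixes fs :: "nat \<Rightarrow> 'a::metric_space \<Rightarrow> 'a" and k :: nat and e :: real
  assumes H: "\<And>e. e>0 \<Longrightarrow> \<exists>d>0. \<forall>n\<ge>1. \<forall>x y. dist x y < d \<longrightarrow> dist (fs n x) (fs n y) < e"
  shows "e>0 \<Longrightarrow> \<exists>d>0. \<forall>i::nat\<ge>1. \<forall>x y. dist x y < d \<longrightarrow> dist (comp_from fs i k x) (comp_from fs i k y) < e"
proof (induction k arbitrary: e)
  case 0 then show ?case by (intro exI[of _ e]) auto
next
  case (Suc k)
  obtain h where h: "h > 0" "\<forall>n\<ge>1. \<forall>x y. dist x y < h \<longrightarrow> dist (fs n x) (fs n y) < e"
    using H[OF Suc.prems] by blast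
  obtain d where d: "d > 0" "\<forall>i\<ge>1. \<forall>x y. dist x y < d \<longrightarrow> dist (comp_from fs i k x) (comp_from fs i k y) < h"
    using Suc.IH[OF h(1)] by blast
  show ?case
  proof (intro exI[of _ d] conjI allI impI)
    fix i :: nat and x y :: 'a assume "1 \<le> i" "dist x y < d"
    then have "dist (comp_from fs i k x) (comp_from fs i k y) < h" using d by auto
    then show "dist (comp_from fs i (Suc k) x) (comp_from fs i (Suc k) y) < e"
      using h \<open>1 \<le> i\<close> by simp
  qed (use d in auto)
qed

lemma equi_upto:
  fixes fs :: "nat \<Rightarrow> 'a::metric_space \<Rightarrow> 'a"
  assumes H: "\<And>e. e>0 \<Longrightarrow> \<exists>d>0. \<forall>n\<ge>1. \<forall>x y. dist x y < d \<longrightarrow> dist (fs n x) (fs n y) < e"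
  shows "e>0 \<Longrightarrow> \<exists>d>0. \<forall>k\<le>K. \<forall>i\<ge>1. \<forall>x y. dist x y < d \<longrightarrow> dist (comp_from fs i k x) (comp_from fs i k y) < e"
proof (induction K)
  case 0 then show ?case using equi_comp[OF H, of e 0] by auto
next
  case (Suc K)
  obtain d1 where d1: "d1 > 0" "\<forall>k\<le>K. \<forall>i\<ge>1. \<forall>x y. dist x y < d1 \<longrightarrow> dist (comp_from fs i k x) (comp_from fs i k y) < e"
    using Suc by blast
  obtain d2 where d2: "d2 > 0" "\<forall>i\<ge>1. \<forall>x y. dist x y < d2 \<longrightarrow> dist (comp_from fs i (Suc K) x) (comp_from fs i (Suc K) y) < e"
    using equi_comp[OF H Suc.prems, of "Suc K"] by blast
  show ?case
  proof (intro exI[of _ "min d1 d2"] conjI allI impI)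
    fix k i :: nat and x y :: 'a assume k: "k \<le> Suc K" and i: "1 \<le> i" and xy: "dist x y < min d1 d2"
    show "dist (comp_from fs i k x) (comp_from fs i k y) < e"
    proof (cases "k = Suc K")
      case True then show ?thesis using d2 i xy by auto
    next
      case False then have "k \<le> K" using k by simp
      then show ?thesis using d1 i xy by auto
    qed
  qed (use d1 d2 in auto)
qed

lemma L1:
  fixes c e :: "nat \<Rightarrow> nat" and N :: nat
  assumes N: "N \<ge> 1" and A: "\<And>n. N * e n \<le> c (N*n)" and mono: "\<And>m m'. m \<le> m' \<Longrightarrow> c m \<le> c m'"
    and h: "\<forall>\<epsilon>>0. \<forall>M. \<exists>m\<ge>M. real (c m) / real m < \<epsilon>"
  shows "\<forall>\<epsilon>>0. \<forall>M. \<exists>n\<ge>M. real (e n) / real n < \<epsilon>"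
proof (intro allI impI)
  fix \<epsilon> :: real and M :: nat assume \<epsilon>: "\<epsilon> > 0"
  obtain m where m: "m \<ge> N*(M+1)" "real (c m) / real m < \<epsilon>/2" using h \<epsilon> by (meson half_gt_zero)
  define n where "n = m div N"
  have Nn: "N*n \<le> m" unfolding n_def by simp
  have mlt: "m < N*(n+1)"
  proof -
    have "m = N*n + m mod N" unfolding n_def by simp
    moreover have "m mod N < N" using N by simp
    moreover have "N*(n+1) = N*n + N" by simp
    ultimately show ?thesis by linarith
  qed
  have nM: "n \<ge> M+1" unfolding n_def using div_le_mono[OF m(1), of N] N by simp
  have "N * e n \<le> c m" using A[of n] mono[OF Nn] by linarith
  then have r1: "real N * real (e n) \<le> real (c m)" by (metis of_nat_le_iff of_nat_mult)
  have mpos: "real m > 0" using m(1) N by (simp add: less_le_trans)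
  have r2: "real (c m) < \<epsilon>/2 * real m" using m(2) mpos by (simp add: divide_less_eq)
  have r3: "real m < 2 * real N * real n"
  proof -
    have "real m < real N * (real n + 1)" using mlt by (metis of_nat_1 of_nat_add of_nat_less_iff of_nat_mult)
    moreover have "real N * (real n + 1) \<le> 2 * real N * real n"
    proof -
      have "1 \<le> real n" using nM by simp
      then have "real N * 1 \<le> real N * real n" by (intro mult_left_mono) auto
      then show ?thesis by (simp add: algebra_simps)
    qed
    ultimately show ?thesis by linarith
  qed
  have "real N * real (e n) < real N * (\<epsilon> * real n)"
  proof -
    have "\<epsilon>/2 * real m \<le> \<epsilon>/2 * (2 * real N * real n)" using r3 \<epsilon> by (intro mult_left_mono) auto
    then show ?thesis using r1 r2 by (simp add: algebra_simps)
  qed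
  then have "real (e n) < \<epsilon> * real n" using N by simp
  then have "real (e n) / real n < \<epsilon>" using nM by (simp add: divide_less_eq)
  then show "\<exists>n\<ge>M. real (e n) / real n < \<epsilon>" using nM by (intro exI[of _ n]) auto
qed

lemma L2:
  fixes c e :: "nat \<Rightarrow> nat" and N :: nat
  assumes N: "N \<ge> 1" and B: "\<And>n. c (N*n) \<le> N * e (n+1)" and mono: "\<And>m m'. m \<le> m' \<Longrightarrow> c m \<le> c m'"
    and h: "\<exists>\<epsilon>>0. \<forall>M. \<exists>m\<ge>M. real (c m) / real m > \<epsilon>"
  shows "\<exists>\<epsilon>>0. \<forall>M. \<exists>n\<ge>M. real (e n) / real n > \<epsilon>"
proof -
  obtain \<epsilon> where \<epsilon>: "\<epsilon> > 0" "\<forall>M. \<exists>m\<ge>M. real (c m) / real m > \<epsilon>" using h by blast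
  show ?thesis
  proof (intro exI[of _ "\<epsilon>/3"] conjI allI)
    fix M :: nat
    obtain m where m: "m \<ge> N*(M+1)" "real (c m) / real m > \<epsilon>" using \<epsilon> by blast
    define q where "q = m div N"
    have mlt: "m \<le> N*(q+1)"
    proof -
      have "m = N*q + m mod N" unfolding q_def by simp
      moreover have "m mod N < N" using N by simp
      moreover have "N*(q+1) = N*q + N" by simp
      ultimately show ?thesis by linarith
    qed
    have Nq: "N*q \<le> m" unfolding q_def by simp
    have qM: "q \<ge> M+1" unfolding q_def using div_le_mono[OF m(1), of N] N by simp
    have "c m \<le> N * e (q+2)" using mono[OF mlt] B[of "q+1"] by simp
    then have r1: "real (c m) \<le> real N * real (e (q+2))" by (metis of_nat_le_iff of_nat_mult)
    have mpos: "real m > 0" using m(1) N by (simp add: less_le_trans)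
    have r2: "\<epsilon> * real m < real (c m)" using m(2) mpos by (simp add: less_divide_eq)
    have r3: "real N * real q \<le> real m" using Nq by (metis of_nat_le_iff of_nat_mult)
    have "\<epsilon> * (real N * real q) \<le> \<epsilon> * real m" using r3 \<epsilon>(1) by (intro mult_left_mono) auto
    then have "real N * (\<epsilon> * real q) < real N * real (e (q+2))" using r1 r2 by (simp add: algebra_simps)
    then have r4: "\<epsilon> * real q < real (e (q+2))" using N by simp
    have "\<epsilon>/3 * real (q+2) \<le> \<epsilon> * real q" using qM \<epsilon>(1) by (simp add: field_simps)
    then have "\<epsilon>/3 * real (q+2) < real (e (q+2))" using r4 by linarith
    then have "\<epsilon>/3 < real (e (q+2)) / real (q+2)" by (simp add: less_divide_eq)
    then show "\<exists>n\<ge>M. real (e n) / real n > \<epsilon>/3" using qM by (intro exI[of _ "q+2"]) auto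
  qed (use \<epsilon> in auto)
qed

lemma L3:
  fixes c e :: "nat \<Rightarrow> nat" and N :: nat
  assumes N: "N \<ge> 1" and B: "\<And>n. c (N*n) \<le> N * e (n+1)"
    and h: "\<forall>\<epsilon>>0. \<forall>M. \<exists>n\<ge>M. real (e n) / real n < \<epsilon>"
  shows "\<forall>\<epsilon>>0. \<forall>M. \<exists>m\<ge>M. real (c m) / real m < \<epsilon>"
proof (intro allI impI)
  fix \<epsilon> :: real and M :: nat assume \<epsilon>: "\<epsilon> > 0"
  obtain n where n: "n \<ge> M+2" "real (e n) / real n < \<epsilon>/2" using h \<epsilon> by (meson half_gt_zero)
  define q where "q = n - 1"
  have nq: "n = q + 1" "q \<ge> M+1" using n(1) unfolding q_def by auto
  have "c (N*q) \<le> N * e n" using B[of q] nq by simp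
  then have r1: "real (c (N*q)) \<le> real N * real (e n)" by (metis of_nat_le_iff of_nat_mult)
  have r2: "real (e n) < \<epsilon>/2 * real n" using n nq by (simp add: divide_less_eq)
  have "\<epsilon>/2 * real n \<le> \<epsilon> * real q" using nq \<epsilon> by (simp add: field_simps)
  moreover have "real N * real (e n) < real N * (\<epsilon>/2 * real n)"
    using r2 N by (intro mult_strict_left_mono) auto
  ultimately have "real N * real (e n) < real N * (\<epsilon> * real q)"
    using mult_left_mono[of "\<epsilon>/2 * real n" "\<epsilon> * real q" "real N"] by simp
  then have "real (c (N*q)) < real N * (\<epsilon> * real q)" using r1 by linarith
  then have "real (c (N*q)) < \<epsilon> * real (N*q)" by (simp add: algebra_simps)
  moreover have "real (N*q) > 0" using N nq by simp
  ultimately have "real (c (N*q)) / real (N*q) < \<epsilon>" by (simp add: divide_less_eq)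
  moreover have "N*q \<ge> M"
  proof -
    have "1*q \<le> N*q" by (rule mult_le_mono1[OF N])
    then show ?thesis using nq by linarith
  qed
  ultimately show "\<exists>m\<ge>M. real (c m) / real m < \<epsilon>" by blast
qed

lemma L4:
  fixes c e :: "nat \<Rightarrow> nat" and N :: nat
  assumes N: "N \<ge> 1" and A: "\<And>n. N * e n \<le> c (N*n)"
    and h: "\<exists>\<epsilon>>0. \<forall>M. \<exists>n\<ge>M. real (e n) / real n > \<epsilon>"
  shows "\<exists>\<epsilon>>0. \<forall>M. \<exists>m\<ge>M. real (c m) / real m > \<epsilon>"
proof -
  obtain \<epsilon> where \<epsilon>: "\<epsilon> > 0" "\<forall>M. \<exists>n\<ge>M. real (e n) / real n > \<epsilon>" using h by blast
  show ?thesis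
  proof (intro exI[of _ \<epsilon>] conjI allI)
    fix M :: nat
    obtain n where n: "n \<ge> M+1" "real (e n) / real n > \<epsilon>" using \<epsilon> by blast
    have r1: "real N * real (e n) \<le> real (c (N*n))" using A[of n] by (metis of_nat_le_iff of_nat_mult)
    have "real (e n) / real n = real (N * e n) / real (N*n)" using N by simp
    also have "\<dots> \<le> real (c (N*n)) / real (N*n)" using r1 by (intro divide_right_mono) auto
    finally have "real (c (N*n)) / real (N*n) > \<epsilon>" using n by linarith
    moreover have "N*n \<ge> M"
    proof -
      have "1*n \<le> N*n" by (rule mult_le_mono1[OF N])
      then show ?thesis using n by linarith
    qed
    ultimately show "\<exists>m\<ge>M. real (c m) / real m > \<epsilon>" by blast
  qed (use \<epsilon> in auto)
qed


lemma countA: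
  fixes N n :: nat
  assumes h: "\<And>j r. P (N*j) \<Longrightarrow> r < N \<Longrightarrow> Q (N*j+r)"
  shows "N * card {j. j<n \<and> P (N*j)} \<le> card {i. i < N*n \<and> Q i}"
proof -
  let ?S = "{j. j<n \<and> P (N*j)}"
  have inj: "inj_on (\<lambda>(j,r). N*j+r) (?S \<times> {..<N})"
  proof (rule inj_onI, clarsimp)
    fix j r j' r' assume r: "r < N" "r' < N" and eq: "N*j+r = N*j'+r'"
    have d1: "(N*j+r) div N = (N*j'+r') div N" using eq by (rule arg_cong)
    have m1: "(N*j+r) mod N = (N*j'+r') mod N" using eq by (rule arg_cong)
    have "j = j'" using d1 r by simp
    moreover have "r = r'" using m1 r by simp
    ultimately show "j = j' \<and> r = r'" by blast
  qed
  have lt: "N*j + r < N*n" if "j < n" "r < N" for j r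
  proof -
    have "Suc j \<le> n" using that by simp
    then have "N * Suc j \<le> N*n" by (rule mult_le_mono2)
    then show ?thesis using that by simp
  qed
  have sub: "(\<lambda>(j,r). N*j+r) ` (?S \<times> {..<N}) \<subseteq> {i. i < N*n \<and> Q i}"
    using lt h by auto
  have "N * card ?S = card (?S \<times> {..<N})" by (simp add: card_cartesian_product)
  also have "\<dots> = card ((\<lambda>(j,r). N*j+r) ` (?S \<times> {..<N}))" by (rule card_image[OF inj, symmetric])
  also have "\<dots> \<le> card {i. i < N*n \<and> Q i}" by (rule card_mono[OF _ sub]) auto
  finally show ?thesis .
qed

lemma countB:
  fixes N n :: nat
  assumes N: "N \<ge> 1" and h: "\<And>i. Q i \<Longrightarrow> P (N*(i div N + 1))"
  shows "card {i. i < N*n \<and> Q i} \<le> N * card {j. j < n+1 \<and> P (N*j)}"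
proof -
  let ?T = "{j. j < n+1 \<and> P (N*j)}"
  have sub: "{i. i < N*n \<and> Q i} \<subseteq> (\<lambda>(j,r). N*(j-1)+r) ` (?T \<times> {..<N})"
  proof
    fix i assume "i \<in> {i. i < N*n \<and> Q i}"
    then have i: "i < N*n" "Q i" by auto
    have "i div N < n" using less_mult_imp_div_less[of i n N] i(1) by (simp add: mult.commute)
    moreover have "i mod N < N" using N by simp
    ultimately have mem: "(i div N + 1, i mod N) \<in> ?T \<times> {..<N}" using h[OF i(2)] by auto
    have "i = N*((i div N + 1) - 1) + i mod N" by simp
    then show "i \<in> (\<lambda>(j,r). N*(j-1)+r) ` (?T \<times> {..<N})"
      using mem by (auto intro!: image_eqI[of _ _ "(i div N + 1, i mod N)"])
  qed
  have "card {i. i < N*n \<and> Q i} \<le> card ((\<lambda>(j,r). N*(j-1)+r) ` (?T \<times> {..<N}))"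
    by (rule card_mono[OF _ sub]) auto
  also have "\<dots> \<le> card (?T \<times> {..<N})" by (rule card_image_le) auto
  also have "\<dots> = N * card ?T" by (simp add: card_cartesian_product)
  finally show ?thesis .
qed

theorem mainTheorem2:
  fixes fs :: "nat \<Rightarrow> 'a::metric_space \<Rightarrow> 'a" and f :: "'a \<Rightarrow> 'a" and N :: nat
  assumes "compact (UNIV :: 'a set)"
    and "\<And>n. n \<ge> 1 \<Longrightarrow> continuous_on UNIV (fs n)"
    and "uniform_limit UNIV fs f sequentially"
    and "N \<ge> 1"
  shows "DC2' fs \<longleftrightarrow> DC2' (nth_iterate N fs)"
proof -
  have E1: "\<And>e. e>0 \<Longrightarrow> \<exists>d>0. \<forall>n\<ge>1. \<forall>x y. dist x y < d \<longrightarrow> dist (fs n x) (fs n y) < e"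
    using equi_single[OF assms(1) assms(2) assms(3)] by blast
  have EN: "\<And>e. e>0 \<Longrightarrow> \<exists>d>0. \<forall>k\<le>N. \<forall>i\<ge>1. \<forall>x y. dist x y < d \<longrightarrow> dist (comp_from fs i k x) (comp_from fs i k y) < e"
    using equi_upto[OF E1] by blast
  have pair: "((\<exists>\<epsilon>>0. Phi_lower fs x y \<epsilon> = 0) \<longleftrightarrow> (\<exists>\<epsilon>>0. Phi_lower (nth_iterate N fs) x y \<epsilon> = 0)) \<and>
     ((\<forall>t>0. Phi_upper fs x y t > 0) \<longleftrightarrow> (\<forall>t>0. Phi_upper (nth_iterate N fs) x y t > 0))" for x y
  proof -
    define a where "a i = dist (comp_from fs 1 i x) (comp_from fs 1 i y)" for i
    have H: "\<exists>d>0. \<forall>m k. k \<le> N \<longrightarrow> a m < d \<longrightarrow> a (m+k) < e" if e: "e > 0" for e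
    proof -
      obtain d where d: "d>0" "\<forall>k\<le>N. \<forall>i\<ge>1. \<forall>x y. dist x y < d \<longrightarrow> dist (comp_from fs i k x) (comp_from fs i k y) < e"
        using EN[OF e] by blast
      show ?thesis
      proof (intro exI[of _ d] conjI allI impI)
        fix m k :: nat assume k: "k \<le> N" and am: "a m < d"
        have "comp_from fs 1 (m+k) = comp_from fs (1+m) k \<circ> comp_from fs 1 m" by (rule comp_from_add)
        then show "a (m+k) < e" using d k am unfolding a_def by simp
      qed (use d in auto)
    qed
    define C where "C t m = card {i. i<m \<and> a i < t}" for t m
    define E where "E t n = card {j. j<n \<and> a (N*j) < t}" for t n
    have cC: "close_count fs x y t m = C t m" for t m by (simp add: close_count_def C_def a_def)
    have cE: "close_count (nth_iterate N fs) x y t n = E t n" for t n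
      unfolding close_count_def comp_iter by (simp add: E_def a_def)
    have mono: "C t m \<le> C t m'" if "m \<le> m'" for t m m' unfolding C_def by (rule card_mono) (use that in auto)
    have A: "N * E d n \<le> C e (N*n)" if "\<forall>m k. k \<le> N \<longrightarrow> a m < d \<longrightarrow> a (m+k) < e" for e d n
      unfolding C_def E_def by (rule countA) (use that in auto)
    have B: "C d (N*n) \<le> N * E e (n+1)" if hy: "\<forall>m k. k \<le> N \<longrightarrow> a m < d \<longrightarrow> a (m+k) < e" for e d n
      unfolding C_def E_def
    proof (rule countB[OF assms(4)])
      fix i assume ai: "a i < d"
      have eq: "N*(i div N + 1) = i + (N - i mod N)"
      proof -
        have "N*(i div N) + i mod N = i" by (rule mult_div_mod_eq)
        moreover have "i mod N < N" using assms(4) by simp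
        moreover have "N*(i div N + 1) = N*(i div N) + N" by simp
        ultimately show ?thesis by linarith
      qed
      have "a (i + (N - i mod N)) < e" using hy ai by auto
      then show "a (N*(i div N + 1)) < e" using eq by simp
    qed
    have PL: "Phi_lower fs x y t = liminf (\<lambda>m. ereal (real (C t m) / real m))" for t
      unfolding Phi_lower_def cC ..
    have PLi: "Phi_lower (nth_iterate N fs) x y t = liminf (\<lambda>m. ereal (real (E t m) / real m))" for t
      unfolding Phi_lower_def cE ..
    have PU: "Phi_upper fs x y t = limsup (\<lambda>m. ereal (real (C t m) / real m))" for t
      unfolding Phi_upper_def cC ..
    have PUi: "Phi_upper (nth_iterate N fs) x y t = limsup (\<lambda>m. ereal (real (E t m) / real m))" for t
      unfolding Phi_upper_def cE ..
    have LC: "Phi_lower fs x y t = 0 \<longleftrightarrow> (\<forall>e>0. \<forall>M. \<exists>m\<ge>M. real (C t m) / real m < e)" for t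
      unfolding PL by (rule liminf_zero_iff) simp
    have LE: "Phi_lower (nth_iterate N fs) x y t = 0 \<longleftrightarrow> (\<forall>e>0. \<forall>M. \<exists>m\<ge>M. real (E t m) / real m < e)" for t
      unfolding PLi by (rule liminf_zero_iff) simp
    have UC: "Phi_upper fs x y t > 0 \<longleftrightarrow> (\<exists>e>0. \<forall>M. \<exists>m\<ge>M. real (C t m) / real m > e)" for t
      unfolding PU by (rule limsup_pos_iff)
    have UE: "Phi_upper (nth_iterate N fs) x y t > 0 \<longleftrightarrow> (\<exists>e>0. \<forall>M. \<exists>m\<ge>M. real (E t m) / real m > e)" for t
      unfolding PUi by (rule limsup_pos_iff)
    have I1: "(\<exists>\<epsilon>>0. Phi_lower fs x y \<epsilon> = 0) \<longleftrightarrow> (\<exists>\<epsilon>>0. Phi_lower (nth_iterate N fs) x y \<epsilon> = 0)"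
    proof
      assume "\<exists>\<epsilon>>0. Phi_lower fs x y \<epsilon> = 0"
      then obtain \<epsilon> where \<epsilon>: "\<epsilon> > 0" "Phi_lower fs x y \<epsilon> = 0" by blast
      obtain d where d: "d > 0" "\<forall>m k. k \<le> N \<longrightarrow> a m < d \<longrightarrow> a (m+k) < \<epsilon>" using H[OF \<epsilon>(1)] by blast
      have "\<forall>e>0. \<forall>M. \<exists>n\<ge>M. real (E d n) / real n < e"
        by (rule L1[where c="C \<epsilon>" and e="E d", OF assms(4) A[OF d(2)] mono]) (use \<epsilon> LC in auto)
      then show "\<exists>\<epsilon>>0. Phi_lower (nth_iterate N fs) x y \<epsilon> = 0" using d(1) LE by blast
    next
      assume "\<exists>\<epsilon>>0. Phi_lower (nth_iterate N fs) x y \<epsilon> = 0"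
      then obtain \<epsilon> where \<epsilon>: "\<epsilon> > 0" "Phi_lower (nth_iterate N fs) x y \<epsilon> = 0" by blast
      obtain d where d: "d > 0" "\<forall>m k. k \<le> N \<longrightarrow> a m < d \<longrightarrow> a (m+k) < \<epsilon>" using H[OF \<epsilon>(1)] by blast
      have "\<forall>e>0. \<forall>M. \<exists>m\<ge>M. real (C d m) / real m < e"
        by (rule L3[where c="C d" and e="E \<epsilon>", OF assms(4) B[OF d(2)]]) (use \<epsilon> LE in auto)
      then show "\<exists>\<epsilon>>0. Phi_lower fs x y \<epsilon> = 0" using d(1) LC by blast
    qed
    have I2: "(\<forall>t>0. Phi_upper fs x y t > 0) \<longleftrightarrow> (\<forall>t>0. Phi_upper (nth_iterate N fs) x y t > 0)"
    proof (intro iffI allI impI)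
      fix t :: real assume hyp: "\<forall>t>0. Phi_upper fs x y t > 0" and t: "t > 0"
      obtain d where d: "d > 0" "\<forall>m k. k \<le> N \<longrightarrow> a m < d \<longrightarrow> a (m+k) < t" using H[OF t] by blast
      have "\<exists>e>0. \<forall>M. \<exists>n\<ge>M. real (E t n) / real n > e"
        by (rule L2[where c="C d" and e="E t", OF assms(4) B[OF d(2)] mono]) (use hyp d UC in auto)
      then show "Phi_upper (nth_iterate N fs) x y t > 0" using UE by blast
    next
      fix t :: real assume hyp: "\<forall>t>0. Phi_upper (nth_iterate N fs) x y t > 0" and t: "t > 0"
      obtain d where d: "d > 0" "\<forall>m k. k \<le> N \<longrightarrow> a m < d \<longrightarrow> a (m+k) < t" using H[OF t] by blast
      have "\<exists>e>0. \<forall>M. \<exists>m\<ge>M. real (C t m) / real m > e"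
        by (rule L4[where c="C t" and e="E d", OF assms(4) A[OF d(2)]]) (use hyp d UE in auto)
      then show "Phi_upper fs x y t > 0" using UC by blast
    qed
    show ?thesis using I1 I2 by blast
  qed
  define P where "P g x y \<longleftrightarrow> (\<exists>\<epsilon>>0. Phi_lower g x y \<epsilon> = 0) \<and> (\<forall>t>0. Phi_upper g x y t > 0)"
    for g :: "nat \<Rightarrow> 'a \<Rightarrow> 'a" and x y
  have PP: "P fs x y = P (nth_iterate N fs) x y" for x y
    unfolding P_def using pair[of x y] by blast
  have D: "DC2' g \<longleftrightarrow> (\<exists>S. uncountable S \<and> (\<forall>x\<in>S. \<forall>y\<in>S. x \<noteq> y \<longrightarrow> P g x y))" for g
    unfolding DC2'_def P_def ..
  show ?thesis unfolding D PP ..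
qed

end
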